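(* For every integer $n\ge0$: $a_{5,0}(4n)=a_5(4n)$, $a_{5,0}(4n+1)=a_5(4n+1)$, $a_{5,0}(4n+2)=0$, and $a_{5,0}(4n+3)=a_5(n)$.
   Context: For a partition $\pi$, $\pi'$ is its conjugate, $\mathcal O(\pi)$ the number of odd parts, and $\mathrm{srank}(\pi)=\mathcal O(\pi)-\mathcal O(\pi')$. A 5-core is a partition with no rim hook (border strip) of length $5$. $a_5(n)$ is the number of partitions of $n$ that are 5-cores, and $a_{5,0}(n)$ is the number of 5-cores of $n$ with $\mathrm{srank}\equiv0\pmod4$. *)

theory Defs
  imports Main
begin

definition is_partition :: "nat \<Rightarrow> nat list \<Rightarrow> bool" where
  "is_partition n p \<longleftrightarrow> sorted_wrt (\<ge>) p \<and> (\<forall>x\<in>set p. 0 < x) \<and> sum_list p = n"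

definition partitions :: "nat \<Rightarrow> nat list set" where
  "partitions n = {p. is_partition n p}"

definition conjugate :: "nat list \<Rightarrow> nat list" where
  "conjugate p = map (\<lambda>j. length (filter (\<lambda>x. j < x) p)) [0..<foldr max p 0]"

definition num_odd :: "nat list \<Rightarrow> nat" where
  "num_odd p = length (filter odd p)"

definition srank :: "nat list \<Rightarrow> int" where
  "srank p = int (num_odd p) - int (num_odd (conjugate p))"

definition diagram :: "nat list \<Rightarrow> (nat \<times> nat) set" where
  "diagram p = {(i, j). i < length p \<and> j < p ! i}"

definition adjacent_cells :: "nat \<times> nat \<Rightarrow> nat \<times> nat \<Rightarrow> bool" where
  "adjacent_cells a b \<longleftrightarrow>
     (fst a = fst b \<and> (snd a = Suc (snd b) \<or> snd b = Suc (snd a))) \<or>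
     (snd a = snd b \<and> (fst a = Suc (fst b) \<or> fst b = Suc (fst a)))"

definition cells_connected :: "(nat \<times> nat) set \<Rightarrow> bool" where
  "cells_connected S \<longleftrightarrow>
     (\<forall>a\<in>S. \<forall>b\<in>S. (\<lambda>x y. x \<in> S \<and> y \<in> S \<and> adjacent_cells x y)\<^sup>*\<^sup>* a b)"

definition contains_2x2 :: "(nat \<times> nat) set \<Rightarrow> bool" where
  "contains_2x2 S \<longleftrightarrow> (\<exists>i j. (i, j) \<in> S \<and> (Suc i, j) \<in> S \<and> (i, Suc j) \<in> S \<and> (Suc i, Suc j) \<in> S)"

definition has_rim_hook :: "nat \<Rightarrow> nat list \<Rightarrow> bool" where
  "has_rim_hook t p \<longleftrightarrow>
     (\<exists>q m. is_partition m q \<and> diagram q \<subseteq> diagram p \<and>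
        card (diagram p - diagram q) = t \<and>
        cells_connected (diagram p - diagram q) \<and>
        \<not> contains_2x2 (diagram p - diagram q))"

definition is_core :: "nat \<Rightarrow> nat list \<Rightarrow> bool" where
  "is_core t p \<longleftrightarrow> \<not> has_rim_hook t p"

definition a5 :: "nat \<Rightarrow> nat" where
  "a5 n = card {p \<in> partitions n. is_core 5 p}"

definition a50 :: "nat \<Rightarrow> nat" where
  "a50 n = card {p \<in> partitions n. is_core 5 p \<and> srank p mod 4 = 0}"

end

theory Submission
  imports Defs
begin
definition pp :: "nat list \<Rightarrow> nat \<Rightarrow> nat" where
  "pp p i = (if i < length p then p ! i else 0)"

definition mm :: "nat list \<Rightarrow> nat \<Rightarrow> int" where
  "mm p k = int (pp p k) - int k - 1"

lemma pp_antimono: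
  assumes "is_partition n p" "i \<le> j"
  shows "pp p j \<le> pp p i"
proof -
  have s: "sorted_wrt (\<ge>) p" using assms(1) by (simp add: is_partition_def)
  show ?thesis
  proof (cases "j < length p")
    case True
    then show ?thesis using assms(2) s
      by (cases "i = j") (auto simp: pp_def sorted_wrt_iff_nth_less)
  next
    case False
    then show ?thesis by (simp add: pp_def)
  qed
qed

lemma pp_pos: "is_partition n p \<Longrightarrow> (0 < pp p i) = (i < length p)"
  by (auto simp: pp_def is_partition_def)

lemma diagram_pp: "is_partition n p \<Longrightarrow> diagram p = {(i,j). j < pp p i}"
  by (auto simp: diagram_def pp_def is_partition_def split: if_splits)

lemma mm_strict:
  assumes "is_partition n p" "i < j"
  shows "mm p j < mm p i"
  using pp_antimono[OF assms(1), of i j] assms(2) by (simp add: mm_def)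

lemma mm_strict_iff:
  assumes "is_partition n p"
  shows "mm p j < mm p i \<longleftrightarrow> i < j"
  using mm_strict[OF assms] by (metis less_asym linorder_neqE_nat)

lemma mm_inj: "is_partition n p \<Longrightarrow> mm p i = mm p j \<Longrightarrow> i = j"
  using mm_strict by (metis less_irrefl linorder_neqE_nat)

lemma mm_tail: "length p \<le> k \<Longrightarrow> mm p k = - int k - 1"
  by (simp add: mm_def pp_def)

lemma mm_ge: "mm p k \<ge> - int k - 1"
  by (simp add: mm_def)

lemma pp_eq_partition:
  assumes "is_partition n p" "is_partition m q" "pp p = pp q"
  shows "p = q"
proof -
  have "length p = length q"
  proof -
    have "\<And>i. (i < length p) = (i < length q)"
      using pp_pos[OF assms(1)] pp_pos[OF assms(2)] assms(3) by metis
    then show ?thesis by (meson linorder_neqE_nat less_irrefl)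
  qed
  moreover have "\<And>i. i < length p \<Longrightarrow> p ! i = q ! i"
    using assms(3) calculation by (metis pp_def)
  ultimately show ?thesis by (simp add: nth_equalityI)
qed

lemma strict_dec_range_eq:
  fixes f g :: "nat \<Rightarrow> int"
  assumes f: "\<And>i j. i < j \<Longrightarrow> f j < f i" and g: "\<And>i j. i < j \<Longrightarrow> g j < g i"
    and r: "range f = range g"
  shows "f k = g k"
proof (induction k rule: less_induct)
  case (less k)
  obtain j where j: "f k = g j" using r by (metis rangeI image_iff)
  obtain i where i: "g k = f i" using r by (metis rangeI image_iff)
  show ?case
  proof (cases "j < k")
    case True
    then have "g j = f j" using less by simp
    then show ?thesis using f[OF True] j by simp
  next
    case False
    show ?thesis
    proof (cases "j = k")
      case True then show ?thesis using j by simp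
    next
      case False2: False
      with False have "k < j" by simp
      then have "f k < g k" using g j by simp
      then have "f k < f i" using i by simp
      then have "i < k" using f by (metis linorder_neqE_nat less_asym)
      then have "g i = f i" using less by simp
      then have "g i = g k" using i by simp
      then show ?thesis using g \<open>i < k\<close> by (metis less_irrefl)
    qed
  qed
qed

definition Mset :: "nat list \<Rightarrow> int set" where
  "Mset p = range (mm p)"

lemma Mset_inj:
  assumes "is_partition n p" "is_partition m q" "Mset p = Mset q"
  shows "p = q"
proof -
  have "\<And>k. mm p k = mm q k"
    using strict_dec_range_eq[of "mm p" "mm q"] mm_strict[OF assms(1)] mm_strict[OF assms(2)]
      assms(3) by (simp add: Mset_def)
  then have "pp p = pp q" by (auto simp: mm_def)
  then show ?thesis using pp_eq_partition assms(1,2) by blast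
qed

lemma rtranclp_cross:
  assumes "r\<^sup>*\<^sup>* a b" "P a" "\<not> P b"
  shows "\<exists>x y. r x y \<and> P x \<and> \<not> P y"
  using assms by (induction rule: rtranclp_induct) auto

lemma diagram_finite: "is_partition n p \<Longrightarrow> finite (diagram p)"
proof -
  assume p: "is_partition n p"
  have "diagram p \<subseteq> {..<length p} \<times> {..<pp p 0}"
    using pp_antimono[OF p, of 0] by (auto simp: diagram_pp[OF p] pp_pos[OF p, symmetric])
      (metis less_le_trans pp_antimono[OF p] zero_le)
  then show ?thesis by (rule finite_subset) auto
qed

lemma telescope:
  fixes P R :: "nat \<Rightarrow> nat"
  assumes "\<And>i. i0 \<le> i \<Longrightarrow> i < i0 + d \<Longrightarrow> int (R i) = int (P (Suc i)) - 1"
  shows "(\<Sum>i\<in>{i0..i0+d}. int (P i) - int (R i)) = int (P i0) - int (R (i0+d)) + int d"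
  using assms
proof (induction d)
  case 0 then show ?case by simp
next
  case (Suc d)
  have "{i0..i0 + Suc d} = insert (Suc (i0+d)) {i0..i0+d}" by auto
  then have "(\<Sum>i\<in>{i0..i0+Suc d}. int (P i) - int (R i)) =
      (int (P (Suc (i0+d))) - int (R (Suc (i0+d)))) + (\<Sum>i\<in>{i0..i0+d}. int (P i) - int (R i))"
    by simp
  also have "\<dots> = int (P (Suc (i0+d))) - int (R (Suc (i0+d))) + int (P i0) - int (R (i0+d)) + int d"
    using Suc by simp
  also have "int (R (i0+d)) = int (P (Suc (i0+d))) - 1" using Suc.prems by simp
  finally show ?case by simp
qed

lemma rim_hook_imp_gap:
  assumes p: "is_partition n p" and t: "t > 0" and h: "has_rim_hook t p"
  shows "\<exists>x \<in> Mset p. x - int t \<notin> Mset p"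
proof -
  obtain q m where q: "is_partition m q" and sub: "diagram q \<subseteq> diagram p"
    and card: "card (diagram p - diagram q) = t"
    and conn: "cells_connected (diagram p - diagram q)"
    and no2: "\<not> contains_2x2 (diagram p - diagram q)"
    using h by (auto simp: has_rim_hook_def)
  define P where "P = pp p"
  define R where "R = pp q"
  define \<theta> where "\<theta> = diagram p - diagram q"
  have RP: "R i \<le> P i" for i
  proof (cases "R i = 0")
    case False
    then have "(i, R i - 1) \<in> diagram q" by (simp add: diagram_pp[OF q] R_def)
    then have "(i, R i - 1) \<in> diagram p" using sub by blast
    then show ?thesis using False by (simp add: diagram_pp[OF p] P_def)
  qed simp
  have th: "\<theta> = {(i,j). R i \<le> j \<and> j < P i}"
    by (auto simp: \<theta>_def diagram_pp[OF p] diagram_pp[OF q] P_def R_def)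
  have fin: "finite \<theta>" using diagram_finite[OF p] by (simp add: \<theta>_def)
  have ne: "\<theta> \<noteq> {}" using card t by (metis \<theta>_def card.empty less_irrefl)
  define Rows where "Rows = fst ` \<theta>"
  have Rows: "Rows = {i. R i < P i}"
    by (auto simp: Rows_def th image_iff)
  have finR: "finite Rows" and neR: "Rows \<noteq> {}" using fin ne by (auto simp: Rows_def)
  define i0 where "i0 = Min Rows"
  define i1 where "i1 = Max Rows"
  have i0R: "i0 \<in> Rows" and i1R: "i1 \<in> Rows" using finR neR by (auto simp: i0_def i1_def)
  have i01: "i0 \<le> i1" using finR i0R by (simp add: i1_def i0_def)
  have outside: "R i = P i" if "i < i0 \<or> i1 < i" for i
  proof -
    have "i \<notin> Rows" using that finR i0_def i1_def
      by (metis Max_ge Min_le leD)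
    then show ?thesis using Rows RP by (metis le_neq_implies_less mem_Collect_eq)
  qed
  have C1: "R i < P (Suc i)" if "i0 \<le> i" "i < i1" for i
  proof -
    have a: "(i0, P i0 - 1) \<in> \<theta>" using i0R Rows th by auto
    have b: "(i1, P i1 - 1) \<in> \<theta>" using i1R Rows th by auto
    have "(\<lambda>x y. x \<in> \<theta> \<and> y \<in> \<theta> \<and> adjacent_cells x y)\<^sup>*\<^sup>* (i0, P i0 - 1) (i1, P i1 - 1)"
      using conn a b by (simp add: cells_connected_def \<theta>_def)
    from rtranclp_cross[OF this, of "\<lambda>c. fst c \<le> i"] that
    obtain x y where xy: "x \<in> \<theta>" "y \<in> \<theta>" "adjacent_cells x y" "fst x \<le> i" "\<not> fst y \<le> i"
      by auto
    then have "snd x = snd y" "fst y = Suc (fst x)"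
      by (auto simp: adjacent_cells_def)
    then have "fst x = i" using xy by simp
    then show ?thesis using xy \<open>snd x = snd y\<close> \<open>fst y = Suc (fst x)\<close> th
      by (cases x, cases y) auto
  qed
  have C2: "P (Suc i) \<le> R i + 1" if "i0 \<le> i" "i < i1" for i
  proof (rule ccontr)
    assume "\<not> P (Suc i) \<le> R i + 1"
    then have lt: "R i + 2 \<le> P (Suc i)" by simp
    have Rmono: "R (Suc i) \<le> R i" using pp_antimono[OF q] by (simp add: R_def)
    have Pmono: "P (Suc i) \<le> P i" using pp_antimono[OF p] by (simp add: P_def)
    let ?j = "P (Suc i) - 2"
    have "(i, ?j) \<in> \<theta>" "(Suc i, ?j) \<in> \<theta>" "(i, Suc ?j) \<in> \<theta>" "(Suc i, Suc ?j) \<in> \<theta>"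
      using lt Rmono Pmono th by auto
    then have "contains_2x2 \<theta>" unfolding contains_2x2_def by blast
    then show False using no2 by (simp add: \<theta>_def)
  qed
  have Req: "int (R i) = int (P (Suc i)) - 1" if "i0 \<le> i" "i < i0 + (i1 - i0)" for i
  proof -
    have "i < i1" using that i01 by simp
    then show ?thesis using C1[of i] C2[of i] that by simp
  qed
  have thS: "\<theta> = Sigma {i0..i1} (\<lambda>i. {R i..<P i})"
  proof -
    have "\<And>i j. (i,j) \<in> \<theta> \<Longrightarrow> i0 \<le> i \<and> i \<le> i1"
      using finR by (auto simp: i0_def i1_def Rows_def intro!: Min_le Max_ge) (force+)
    then show ?thesis using th by auto
  qed
  have "int t = int (card \<theta>)" using card by (simp add: \<theta>_def)
  also have "card \<theta> = (\<Sum>i\<in>{i0..i1}. card {R i..<P i})"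
    by (simp add: thS)
  also have "int \<dots> = (\<Sum>i\<in>{i0..i0+(i1-i0)}. int (P i) - int (R i))"
    using RP i01 by (simp add: of_nat_diff)
  also have "\<dots> = int (P i0) - int (R (i0 + (i1 - i0))) + int (i1 - i0)"
    by (rule telescope) (rule Req)
  finally have tval: "int t = int (P i0) - int (R i1) + int i1 - int i0" using i01 by simp
  define v where "v = int (R i1) - int i1 - 1"
  have xin: "mm p i0 \<in> Mset p" by (simp add: Mset_def)
  have "mm p i0 - int t = v" using tval by (simp add: mm_def P_def v_def)
  moreover have "v \<notin> Mset p"
  proof
    assume "v \<in> Mset p"
    then obtain k where k: "mm p k = v" by (auto simp: Mset_def)
    have "mm p i1 > v" using i1R Rows by (simp add: mm_def P_def v_def)
    then have "k > i1" using k mm_strict_iff[OF p] by metis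
    have "P (Suc i1) = R (Suc i1)" using outside[of "Suc i1"] by simp
    moreover have "R (Suc i1) \<le> R i1" using pp_antimono[OF q] by (simp add: R_def)
    ultimately have "mm p (Suc i1) < v" by (simp add: mm_def P_def v_def)
    then have "k < Suc i1" using k mm_strict_iff[OF p] by metis
    then show False using \<open>k > i1\<close> by simp
  qed
  ultimately show ?thesis using xin by metis
qed

lemma mk_partition:
  fixes f :: "nat \<Rightarrow> nat"
  assumes mono: "\<And>i. f (Suc i) \<le> f i" and z: "f L = 0"
  shows "\<exists>q. is_partition (sum_list q) q \<and> pp q = f"
proof -
  have am: "i \<le> j \<Longrightarrow> f j \<le> f i" for i j using lift_Suc_antimono_le[of f] mono by blast
  define L' where "L' = (LEAST i. f i = 0)"
  have fL': "f L' = 0" using z unfolding L'_def by (rule LeastI)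
  have pos: "i < L' \<Longrightarrow> 0 < f i" for i using not_less_Least[of i "\<lambda>i. f i = 0"] by (simp add: L'_def)
  define q where "q = map f [0..<L']"
  have "sorted_wrt (\<ge>) q" unfolding q_def
    by (auto simp: sorted_wrt_iff_nth_less am)
  moreover have "\<forall>x\<in>set q. 0 < x" using pos by (auto simp: q_def)
  moreover have "pp q = f"
  proof
    fix i show "pp q i = f i"
    proof (cases "i < L'")
      case True then show ?thesis by (simp add: pp_def q_def)
    next
      case False then have "f i \<le> f L'" using am by simp
      then show ?thesis using False fL' by (simp add: pp_def q_def)
    qed
  qed
  ultimately show ?thesis by (auto simp: is_partition_def)
qed

lemma rtranclp_sym:
  assumes "\<And>x y. r x y \<Longrightarrow> r y x" "r\<^sup>*\<^sup>* a b"
  shows "r\<^sup>*\<^sup>* b a"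
  using assms(2) by (induction rule: rtranclp_induct) (auto intro: converse_rtranclp_into_rtranclp assms(1))

lemma gap_imp_rim_hook:
  assumes p: "is_partition n p" and t: "t > 0" and xM: "x \<in> Mset p" and vM: "x - int t \<notin> Mset p"
  shows "has_rim_hook t p"
proof -
  define P where "P = pp p"
  define v where "v = x - int t"
  obtain k0 where k0: "mm p k0 = x" using xM by (auto simp: Mset_def)
  have vM': "\<And>k. mm p k \<noteq> v" using vM unfolding Mset_def v_def by (metis rangeI)
  have ex: "\<exists>i. mm p i < v"
  proof
    let ?i = "nat (- v) + length p"
    show "mm p ?i < v" using mm_tail[of p ?i] by simp
  qed
  define i2 where "i2 = (LEAST i. mm p i < v)"
  have i2: "mm p i2 < v" using ex unfolding i2_def by (rule LeastI_ex)
  have "k0 < i2"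
  proof (rule ccontr)
    assume "\<not> k0 < i2"
    then have "mm p k0 \<le> mm p i2" using mm_strict[OF p, of i2 k0] by (cases "i2 = k0") auto
    then show False using i2 k0 t by (simp add: v_def)
  qed
  define i1 where "i1 = i2 - 1"
  have i1: "Suc i1 = i2" "k0 \<le> i1" using \<open>k0 < i2\<close> by (auto simp: i1_def)
  have "\<not> mm p i1 < v" using not_less_Least[of i1 "\<lambda>i. mm p i < v"] i1 by (simp add: i2_def)
  then have mi1: "mm p i1 > v" using vM'[of i1] by simp
  have mi2: "mm p (Suc i1) < v" using i2 i1 by simp
  define j0 where "j0 = nat (v + int i1 + 1)"
  have j0: "int j0 = v + int i1 + 1" using mi2 by (simp add: j0_def mm_def)
  have Pj0: "P (Suc i1) \<le> j0" "j0 < P i1" using mi1 mi2 j0 by (simp_all add: mm_def P_def)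
  define f where "f i = (if k0 \<le> i \<and> i < i1 then P (Suc i) - 1 else if i = i1 then j0 else P i)" for i
  have Pam: "i \<le> j \<Longrightarrow> P j \<le> P i" for i j using pp_antimono[OF p] by (simp add: P_def)
  have fmono: "f (Suc i) \<le> f i" for i
    using Pam[of i "Suc i"] Pam[of "Suc i" "Suc (Suc i)"] Pam[of "Suc i" i1] Pj0
    by (auto simp: f_def)
  have i1len: "i1 < length p" using Pj0 pp_pos[OF p, of i1] by (simp add: P_def)
  have fz: "f (length p) = 0" using i1len by (simp add: f_def P_def pp_def)
  obtain q where q: "is_partition (sum_list q) q" and ppq: "pp q = f"
    using mk_partition[OF fmono fz] by blast
  have fP: "f i \<le> P i" for i
    using Pam[of i "Suc i"] Pj0 by (auto simp: f_def)
  have sub: "diagram q \<subseteq> diagram p"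
    using fP by (auto simp: diagram_pp[OF q] diagram_pp[OF p] ppq P_def intro: less_le_trans)
  define \<theta> where "\<theta> = diagram p - diagram q"
  have th: "\<theta> = {(i,j). f i \<le> j \<and> j < P i}"
    by (auto simp: \<theta>_def diagram_pp[OF p] diagram_pp[OF q] P_def ppq)
  have rows: "k0 \<le> i \<and> i \<le> i1" if "(i,j) \<in> \<theta>" for i j
    using that i1(2) by (auto simp: th f_def split: if_splits)
  have feq: "int (f i) = int (P (Suc i)) - 1" if "k0 \<le> i" "i < k0 + (i1 - k0)" for i
  proof -
    have "P (Suc i) \<ge> P i1" using Pam that by simp
    then show ?thesis using that Pj0 i1(2) by (simp add: f_def)
  qed
  have thS: "\<theta> = Sigma {k0..i1} (\<lambda>i. {f i..<P i})" using rows th by auto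
  have "int (card \<theta>) = (\<Sum>i\<in>{k0..k0+(i1-k0)}. int (P i) - int (f i))"
    using fP i1 by (simp add: thS of_nat_diff)
  also have "\<dots> = int (P k0) - int (f (k0 + (i1 - k0))) + int (i1 - k0)"
    by (rule telescope) (rule feq)
  also have "\<dots> = int t" using i1 j0 k0 by (simp add: f_def mm_def P_def v_def of_nat_diff)
  finally have card: "card \<theta> = t" by simp
  have no2: "\<not> contains_2x2 \<theta>"
  proof
    assume "contains_2x2 \<theta>"
    then obtain i j where c: "(i, j) \<in> \<theta>" "(Suc i, j) \<in> \<theta>" "(i, Suc j) \<in> \<theta>" "(Suc i, Suc j) \<in> \<theta>"
      by (auto simp: contains_2x2_def)
    have "k0 \<le> i" "i < i1" using rows[OF c(1)] rows[OF c(2)] by auto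
    then show False using c(1,4) by (auto simp: th f_def)
  qed
  define r where "r = (\<lambda>x y. x \<in> \<theta> \<and> y \<in> \<theta> \<and> adjacent_cells x y)"
  have rsym: "r x y \<Longrightarrow> r y x" for x y by (auto simp: r_def adjacent_cells_def)
  have rowmove: "r\<^sup>*\<^sup>* (i, f i + d) (i, f i)" if "f i + d < P i" for i d
    using that
  proof (induction d)
    case 0 then show ?case by simp
  next
    case (Suc d)
    have "r (i, f i + Suc d) (i, f i + d)" using Suc.prems by (auto simp: r_def th adjacent_cells_def)
    moreover have "r\<^sup>*\<^sup>* (i, f i + d) (i, f i)" using Suc by simp
    ultimately show ?case by (rule converse_rtranclp_into_rtranclp)
  qed
  have toend: "\<And>i j. i1 - i = d \<Longrightarrow> (i,j) \<in> \<theta> \<Longrightarrow> r\<^sup>*\<^sup>* (i,j) (i1,j0)" for d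
  proof (induction d)
    case (0 i j)
    then have "i = i1" using rows[OF "0.prems"(2)] by simp
    then have "f i1 \<le> j" "j < P i1" using 0 by (auto simp: th)
    then show ?case using rowmove[of i1 "j - f i1"] \<open>i = i1\<close> by (simp add: f_def)
  next
    case (Suc d i j)
    have ri: "k0 \<le> i" "i < i1" using rows[OF Suc.prems(2)] Suc.prems(1) by auto
    have fi: "f i \<le> j" "j < P i" using Suc.prems(2) by (auto simp: th)
    have "P (Suc i) \<ge> P i1" using Pam ri by simp
    then have fi2: "f i = P (Suc i) - 1" "1 \<le> P (Suc i)" using ri Pj0 by (auto simp: f_def)
    have s1: "r\<^sup>*\<^sup>* (i, j) (i, f i)" using rowmove[of i "j - f i"] fi by simp
    have c2: "(Suc i, f i) \<in> \<theta>" using fmono[of i] fi2 by (auto simp: th)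
    have c1: "(i, f i) \<in> \<theta>" using fi by (auto simp: th)
    have s2: "r (i, f i) (Suc i, f i)" using c1 c2 by (auto simp: r_def adjacent_cells_def)
    have s3: "r\<^sup>*\<^sup>* (Suc i, f i) (i1, j0)" using Suc.IH[of "Suc i" "f i"] Suc.prems(1) c2 by simp
    show ?case using s1 s2 s3 by (meson rtranclp.rtrancl_into_rtrancl rtranclp_trans converse_rtranclp_into_rtranclp)
  qed
  have conn: "cells_connected \<theta>"
    unfolding cells_connected_def
  proof (intro ballI)
    fix a b assume a: "a \<in> \<theta>" and b: "b \<in> \<theta>"
    have "r\<^sup>*\<^sup>* a (i1, j0)" using toend a by (cases a) auto
    moreover have "r\<^sup>*\<^sup>* (i1, j0) b" using toend b rtranclp_sym[of r] rsym by (cases b) blast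
    ultimately show "(\<lambda>x y. x \<in> \<theta> \<and> y \<in> \<theta> \<and> adjacent_cells x y)\<^sup>*\<^sup>* a b"
      unfolding r_def[symmetric] by (rule rtranclp_trans)
  qed
  show ?thesis unfolding has_rim_hook_def
    using q sub card conn no2 by (auto simp: \<theta>_def)
qed

lemma core_iff:
  assumes p: "is_partition n p" and t: "t > 0"
  shows "is_core t p \<longleftrightarrow> (\<forall>x\<in>Mset p. x - int t \<in> Mset p)"
  using rim_hook_imp_gap[OF p t] gap_imp_rim_hook[OF p t] by (auto simp: is_core_def)

lemma dec_gap:
  fixes ys :: "int list"
  assumes s: "sorted_wrt (>) ys" and ij: "i \<le> j" "j < length ys"
  shows "ys ! j + int (j - i) \<le> ys ! i"
  using ij
proof (induction j)
  case 0 then show ?case by simp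
next
  case (Suc j)
  show ?case
  proof (cases "i = Suc j")
    case True then show ?thesis by simp
  next
    case False
    then have "i \<le> j" using Suc by simp
    then have "ys ! j + int (j - i) \<le> ys ! i" using Suc by simp
    moreover have "ys ! Suc j < ys ! j" using s Suc.prems by (auto simp: sorted_wrt_iff_nth_less)
    ultimately show ?thesis using \<open>i \<le> j\<close> by (simp add: Suc_diff_le)
  qed
qed

lemma from_maya:
  fixes M :: "int set"
  assumes fin: "finite (M \<inter> {- int K..})" and c: "card (M \<inter> {- int K..}) = K"
    and tl: "\<And>x. x < - int K \<Longrightarrow> x \<in> M"
  shows "\<exists>p. is_partition (sum_list p) p \<and> Mset p = M"
proof -
  define F where "F = M \<inter> {- int K..}"
  define ys where "ys = rev (sorted_list_of_set F)"
  have ys: "sorted_wrt (>) ys" "set ys = F" "length ys = K"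
    using fin c by (auto simp: ys_def F_def sorted_wrt_rev strict_sorted_list_of_set)
  have ysK: "k < K \<Longrightarrow> ys ! k \<ge> - int K" for k using ys(2,3) nth_mem[of k ys] by (auto simp: F_def)
  have lb: "ys ! k \<ge> - int k - 1" if "k < K" for k
  proof -
    have "ys ! (K - 1) + int (K - 1 - k) \<le> ys ! k" using dec_gap[OF ys(1), of k "K - 1"] that ys(3) by simp
    moreover have "ys ! (K - 1) \<ge> - int K" using ysK[of "K - 1"] that by simp
    ultimately show ?thesis using that by (simp add: of_nat_diff)
  qed
  define f where "f k = (if k < K then nat (ys ! k + int k + 1) else 0)" for k
  have fmono: "f (Suc k) \<le> f k" for k
  proof (cases "Suc k < K")
    case True
    then have "ys ! Suc k < ys ! k" using ys by (auto simp: sorted_wrt_iff_nth_less)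
    then show ?thesis using True by (simp add: f_def nat_le_eq_zle lb)
  qed (simp add: f_def)
  obtain p where p: "is_partition (sum_list p) p" and pp: "pp p = f"
    using mk_partition[of f K] fmono by (auto simp: f_def)
  have mmk: "mm p k = (if k < K then ys ! k else - int k - 1)" for k
    using lb[of k] by (auto simp: mm_def pp f_def)
  have "Mset p = M"
  proof
    show "Mset p \<subseteq> M"
    proof
      fix x assume "x \<in> Mset p"
      then obtain k where k: "x = mm p k" by (auto simp: Mset_def)
      show "x \<in> M"
      proof (cases "k < K")
        case True
        then have "x \<in> set ys" using k mmk ys(3) by simp
        then show ?thesis using ys(2) by (simp add: F_def)
      next
        case False then show ?thesis using k mmk tl by simp
      qed
    qed
  next
    show "M \<subseteq> Mset p"
    proof
      fix x assume xM: "x \<in> M"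
      show "x \<in> Mset p"
      proof (cases "x < - int K")
        case True
        then have "\<not> nat (- x - 1) < K" by simp
        then have "mm p (nat (- x - 1)) = x" using mmk True by simp
        then show ?thesis unfolding Mset_def by (metis rangeI)
      next
        case False
        then have "x \<in> set ys" using xM ys(2) by (simp add: F_def)
        then obtain k where "k < K" "ys ! k = x" using ys(3) by (metis in_set_conv_nth)
        then have "mm p k = x" using mmk by simp
        then show ?thesis unfolding Mset_def by (metis rangeI)
      qed
    qed
  qed
  then show ?thesis using p by blast
qed

lemma mm_window:
  assumes p: "is_partition n p" and L: "length p \<le> K"
  shows "Mset p \<inter> {- int K..} = mm p ` {..<K}"
proof -
  have "mm p k \<ge> - int K \<longleftrightarrow> k < K" for k
  proof
    assume "mm p k \<ge> - int K"
    then show "k < K" using mm_tail[where p=p and k=k] L by (cases "length p \<le> k") (auto simp: mm_def pp_def)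
  next
    assume "k < K" then show "mm p k \<ge> - int K" using mm_ge[where p=p and k=k] by simp
  qed
  then show ?thesis by (auto simp: Mset_def)
qed

lemma mm_window_card:
  assumes p: "is_partition n p" and L: "length p \<le> K"
  shows "card (Mset p \<inter> {- int K..}) = K" "finite (Mset p \<inter> {- int K..})"
proof -
  have "inj_on (mm p) {..<K}" using mm_inj[OF p] by (auto simp: inj_on_def)
  then show "card (Mset p \<inter> {- int K..}) = K" "finite (Mset p \<inter> {- int K..})"
    using mm_window[OF p L] card_image[of "mm p" "{..<K}"] by auto
qed

lemma mm_window_sum:
  assumes p: "is_partition n p" and L: "length p \<le> K"
  shows "(\<Sum>x\<in>Mset p \<inter> {- int K..}. h x) = (\<Sum>k<K. h (mm p k))"
proof -
  have "inj_on (mm p) {..<K}" using mm_inj[OF p] by (auto simp: inj_on_def)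
  then show ?thesis using mm_window[OF p L] sum.reindex[of "mm p" "{..<K}" h] by auto
qed

lemma len_filter_map_upt:
  "length (filter P (map h [0..<m])) = card {j. j < m \<and> P (h j)}"
proof -
  have "{i. i < m \<and> P (map h [0..<m] ! i)} = {j. j < m \<and> P (h j)}" by auto
  then show ?thesis by (simp add: length_filter_conv_card)
qed

definition cnt :: "nat list \<Rightarrow> nat \<Rightarrow> nat" where
  "cnt p j = length (filter (\<lambda>y. j < y) p)"

lemma foldr_max_ge: "x \<in> set p \<Longrightarrow> x \<le> foldr max p (0::nat)"
  by (induction p) auto

lemma cnt_zero: "foldr max p 0 \<le> j \<Longrightarrow> cnt p j = 0"
  using foldr_max_ge[of _ p] by (fastforce simp: cnt_def filter_empty_conv)

lemma num_odd_conj_B: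
  assumes "foldr max p 0 \<le> B"
  shows "num_odd (conjugate p) = card {j. j < B \<and> odd (cnt p j)}"
proof -
  have "num_odd (conjugate p) = length (filter odd (map (cnt p) [0..<foldr max p 0]))"
    by (simp add: num_odd_def conjugate_def cnt_def[abs_def])
  also have "\<dots> = card {j. j < foldr max p 0 \<and> odd (cnt p j)}"
    by (rule len_filter_map_upt)
  also have "{j. j < foldr max p 0 \<and> odd (cnt p j)} = {j. j < B \<and> odd (cnt p j)}"
  proof (rule Collect_cong)
    fix j
    show "(j < foldr max p 0 \<and> odd (cnt p j)) = (j < B \<and> odd (cnt p j))"
      using assms cnt_zero[of p j] by (cases "foldr max p 0 \<le> j") auto
  qed
  finally show ?thesis .
qed

definition alt :: "nat list \<Rightarrow> int" where
  "alt p = (\<Sum>k<length p. (-1)^k * int (p ! k))"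

lemma alt_Cons: "alt (x # p) = int x - alt p"
proof -
  have "alt (x # p) = (\<Sum>k<Suc (length p). (-1)^k * int ((x#p) ! k))" by (simp add: alt_def)
  also have "\<dots> = int x + (\<Sum>k<length p. (-1)^(Suc k) * int ((x#p) ! Suc k))"
    by (subst sum.lessThan_Suc_shift) simp
  also have "\<dots> = int x - alt p" by (simp add: alt_def sum_negf)
  finally show ?thesis .
qed

lemma num_odd_conj:
  assumes "sorted_wrt (\<ge>) p"
  shows "int (num_odd (conjugate p)) = alt p"
  using assms
proof (induction p)
  case Nil then show ?case by (simp add: num_odd_def conjugate_def alt_def)
next
  case (Cons x p)
  have xge: "\<forall>y\<in>set p. y \<le> x" using Cons.prems by simp
  have fm: "foldr max p 0 \<le> x" using xge by (induction p) auto
  have fm2: "foldr max (x # p) 0 \<le> x" using fm by simp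
  have cnt_c: "j < x \<Longrightarrow> cnt (x # p) j = Suc (cnt p j)" for j by (simp add: cnt_def)
  define C where "C = card {j. j < x \<and> odd (cnt p j)}"
  have le: "C \<le> x"
  proof -
    have "C \<le> card {..<x}" unfolding C_def by (rule card_mono) auto
    then show ?thesis by simp
  qed
  have C2: "C = num_odd (conjugate p)" using num_odd_conj_B[OF fm] by (simp add: C_def)
  have "num_odd (conjugate (x # p)) = card {j. j < x \<and> odd (cnt (x#p) j)}"
    by (rule num_odd_conj_B[OF fm2])
  also have "{j. j < x \<and> odd (cnt (x#p) j)} = {j. j < x} - {j. j < x \<and> odd (cnt p j)}"
    using cnt_c by auto
  also have "card \<dots> = x - C"
    unfolding C_def by (subst card_Diff_subset) auto
  finally have "int (num_odd (conjugate (x # p))) = int x - int (num_odd (conjugate p))"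
    using le C2 by (simp add: of_nat_diff)
  then show ?case using Cons by (simp add: alt_Cons)
qed

definition Sg :: "nat list \<Rightarrow> int" where
  "Sg p = (\<Sum>k<length p. if odd (p ! k) then (-1)^k else 0)"

lemma num_odd_sum: "int (num_odd p) = (\<Sum>k<length p. if odd (p ! k) then 1 else 0)"
proof -
  have "num_odd p = card {k. k < length p \<and> odd (p ! k)}"
    by (simp add: num_odd_def length_filter_conv_card)
  also have "int \<dots> = (\<Sum>k<length p. if odd (p ! k) then 1 else 0)"
  proof -
    have "(\<Sum>k<length p. if odd (p ! k) then 1 else (0::int)) = (\<Sum>k\<in>{..<length p} \<inter> {k. odd (p ! k)}. 1)"
      by (simp add: sum.If_cases)
    also have "{..<length p} \<inter> {k. odd (p ! k)} = {k. k < length p \<and> odd (p ! k)}" by auto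
    finally show ?thesis by simp
  qed
  finally show ?thesis .
qed

lemma srank_mod4:
  assumes p: "is_partition n p"
  shows "srank p mod 4 = (int n - Sg p) mod 4"
proof -
  have s: "sorted_wrt (\<ge>) p" and n: "n = sum_list p" using p by (auto simp: is_partition_def)
  have n': "int n = (\<Sum>k<length p. int (p ! k))"
    using n by (simp add: sum_list_sum_nth atLeast0LessThan)
  have sr: "srank p = (\<Sum>k<length p. (if odd (p ! k) then 1 else 0) - (-1)^k * int (p ! k))"
    unfolding srank_def using num_odd_sum[of p] num_odd_conj[OF s] by (simp add: alt_def sum_subtractf)
  have "srank p - (int n - Sg p) =
      (\<Sum>k<length p. ((if odd (p ! k) then 1 else 0) - (-1)^k * int (p ! k))
         - (int (p ! k) - (if odd (p ! k) then (-1)^k else 0)))"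
    by (simp add: sr n' Sg_def sum_subtractf)
  also have "4 dvd \<dots>"
  proof (rule dvd_sum)
    fix k
    show "4 dvd ((if odd (p ! k) then 1 else 0) - (-1)^k * int (p ! k))
         - (int (p ! k) - (if odd (p ! k) then (-1)^k else 0))"
    proof (cases "even k")
      case True
      then show ?thesis
      proof (cases "odd (p ! k)")
        case True
        then obtain m where "p ! k = 2 * m + 1" by (metis oddE)
        then show ?thesis using \<open>even k\<close> by simp
      next
        case False
        then obtain m where "p ! k = 2 * m" by (metis evenE)
        then show ?thesis using \<open>even k\<close> by simp
      qed
    next
      case False then show ?thesis by simp
    qed
  qed
  finally show ?thesis by (metis mod_eq_dvd_iff)
qed

definition gg :: "int \<Rightarrow> int" where "gg x = (if even x then 1 else 0)"

lemma Sg_window: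
  assumes p: "is_partition n p" and L: "length p \<le> K"
  shows "Sg p = (\<Sum>k<K. gg (mm p k) - gg (- int k - 1))"
proof -
  have "Sg p = (\<Sum>k<K. if k < length p \<and> odd (p ! k) then (-1)^k else 0)"
  proof -
    have "(\<Sum>k<K. if k < length p \<and> odd (p ! k) then (-1)^k else 0)
        = (\<Sum>k<length p. if k < length p \<and> odd (p ! k) then (-1)^k else (0::int))"
      using L by (intro sum.mono_neutral_right) auto
    then show ?thesis by (simp add: Sg_def)
  qed
  also have "\<dots> = (\<Sum>k<K. gg (mm p k) - gg (- int k - 1))"
  proof (rule sum.cong)
    fix k assume "k \<in> {..<K}"
    show "(if k < length p \<and> odd (p ! k) then (-1)^k else 0) = gg (mm p k) - gg (- int k - 1)"
    proof (cases "k < length p")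
      case True
      then have mmk: "mm p k = int (p ! k) - int k - 1" by (simp add: mm_def pp_def)
      show ?thesis
        by (cases "even k"; cases "even (p ! k)") (auto simp: mmk gg_def True even_add)
    next
      case False then show ?thesis by (simp add: mm_def pp_def)
    qed
  qed simp
  finally show ?thesis .
qed

definition Ma :: "(nat \<Rightarrow> int) \<Rightarrow> int set" where
  "Ma a = {x. x div 5 < a (nat (x mod 5))}"

lemma Ma_closed: "x \<in> Ma a \<Longrightarrow> x - 5 \<in> Ma a"
proof -
  assume "x \<in> Ma a"
  moreover have "(x - 5) div 5 = x div 5 - 1" "(x - 5) mod 5 = x mod 5" by simp_all
  ultimately show ?thesis by (simp add: Ma_def)
qed

lemma Ma_mem: "r < 5 \<Longrightarrow> (int r + 5 * k \<in> Ma a) = (k < a r)"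
proof -
  assume r: "r < 5"
  have "(int r + 5 * k) div 5 = k" "(int r + 5 * k) mod 5 = int r" using r by simp_all
  then show ?thesis by (simp add: Ma_def)
qed

lemma Ma_inj:
  assumes "Ma a = Ma b" "\<forall>r\<ge>5. a r = 0" "\<forall>r\<ge>5. b r = 0"
  shows "a = b"
proof
  fix r show "a r = b r"
  proof (cases "r < 5")
    case True
    have "\<forall>k. (k < a r) = (k < b r)" using Ma_mem[OF True] assms(1) by metis
    then show ?thesis by (metis linorder_neqE less_irrefl)
  next
    case False then show ?thesis using assms by simp
  qed
qed

lemma Mset_Nil: "Mset [] = Ma (\<lambda>_. 0)"
proof -
  have "Mset [] = {x. x < 0}"
  proof (auto simp: Mset_def mm_def pp_def)
    fix x :: int assume "x < 0"
    then have "x = - int (nat (- x - 1)) - 1" by simp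
    then show "x \<in> range (\<lambda>k. - int k - 1)" by blast
  qed
  also have "\<dots> = Ma (\<lambda>_. 0)" by (auto simp: Ma_def)
  finally show ?thesis .
qed

lemma int_downset:
  fixes S :: "int set"
  assumes dn: "\<And>k. k \<in> S \<Longrightarrow> k - 1 \<in> S" and lo: "lo \<in> S" and hi: "\<And>k. k \<in> S \<Longrightarrow> k \<le> hi"
  shows "\<exists>a. \<forall>k. k \<in> S \<longleftrightarrow> k < a"
proof -
  have dn2: "j \<in> S" if "k \<in> S" "j \<le> k" for j k
    using that(2,1) by (induction j rule: int_le_induct) (auto intro: dn)
  define T where "T = S \<inter> {lo..hi}"
  have fT: "finite T" and nT: "lo \<in> T" using lo hi by (auto simp: T_def)
  define m where "m = Max T"
  have mT: "m \<in> T" using fT nT by (auto simp: m_def intro: Max_in)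
  have "k \<in> S \<longleftrightarrow> k < m + 1" for k
  proof
    assume k: "k \<in> S"
    show "k < m + 1"
    proof (cases "lo \<le> k")
      case True
      then have "k \<in> T" using k hi by (auto simp: T_def)
      then show ?thesis using fT by (simp add: m_def)
    next
      case False
      then show ?thesis using Max_ge[OF fT nT] by (simp add: m_def)
    qed
  next
    assume "k < m + 1"
    then show "k \<in> S" using mT dn2[of m k] by (simp add: T_def)
  qed
  then show ?thesis by blast
qed

lemma mm_upper: "is_partition n p \<Longrightarrow> mm p k \<le> mm p 0"
  using mm_strict[of n p 0 k] by (cases k) auto

lemma core_levels:
  assumes p: "is_partition n p" and cl: "\<forall>x\<in>Mset p. x - 5 \<in> Mset p"
  shows "\<exists>a. (\<forall>r\<ge>5. a r = 0) \<and> Mset p = Ma a"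
proof -
  define L where "L = length p"
  have tail: "x \<in> Mset p" if "x < - int L" for x
  proof -
    have "mm p (nat (- x - 1)) = x" using that mm_tail[of p "nat (- x - 1)"] by (simp add: L_def)
    then show ?thesis unfolding Mset_def by (metis rangeI)
  qed
  have up: "x \<le> mm p 0" if "x \<in> Mset p" for x using that mm_upper[OF p] by (auto simp: Mset_def)
  have lev: "\<exists>b. \<forall>k. (int r + 5 * k \<in> Mset p) \<longleftrightarrow> k < b" for r :: nat
  proof -
    have "\<exists>b. \<forall>k. k \<in> {k. int r + 5 * k \<in> Mset p} \<longleftrightarrow> k < b"
    proof (rule int_downset)
      fix k assume "k \<in> {k. int r + 5 * k \<in> Mset p}"
      then have "int r + 5 * k - 5 \<in> Mset p" using cl by simp
      then show "k - 1 \<in> {k. int r + 5 * k \<in> Mset p}" by (simp add: algebra_simps)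
    next
      show "- int L - int r - 1 \<in> {k. int r + 5 * k \<in> Mset p}" by (auto intro: tail)
    next
      fix k assume "k \<in> {k. int r + 5 * k \<in> Mset p}"
      then have "int r + 5 * k \<le> mm p 0" using up by simp
      moreover have "int r \<ge> 0" by simp
      ultimately show "k \<le> mm p 0" using mm_ge[where p=p and k=0] by linarith
    qed
    then show ?thesis by simp
  qed
  obtain b where b: "\<And>r k. (int r + 5 * k \<in> Mset p) \<longleftrightarrow> k < b r"
    using lev by metis
  define a where "a r = (if r < 5 then b r else 0)" for r
  have "Mset p = Ma a"
  proof (intro set_eqI)
    fix x :: int
    define r where "r = nat (x mod 5)"
    have r5: "r < 5" and xr: "x = int r + 5 * (x div 5)" by (simp_all add: r_def nat_less_iff)
    have "x \<in> Mset p \<longleftrightarrow> x div 5 < b r" using b[of r "x div 5"] xr by simp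
    also have "\<dots> \<longleftrightarrow> x \<in> Ma a" using Ma_mem[OF r5, of "x div 5" a] xr r5 by (simp add: a_def)
    finally show "x \<in> Mset p \<longleftrightarrow> x \<in> Ma a" .
  qed
  moreover have "\<forall>r\<ge>5. a r = 0" by (simp add: a_def)
  ultimately show ?thesis by blast
qed

lemma Ma_window:
  assumes lo: "\<forall>r<5. - int J \<le> a r"
  shows "Ma a \<inter> {- int (5 * J)..} = (\<lambda>(r,k). int r + 5*k) ` (SIGMA r:{..<5::nat}. {- int J..<a r})"
    and "inj_on (\<lambda>(r,k). int r + 5*k) (SIGMA r:{..<5::nat}. {- int J..<a r})"
proof -
  show "Ma a \<inter> {- int (5 * J)..} = (\<lambda>(r,k). int r + 5*k) ` (SIGMA r:{..<5::nat}. {- int J..<a r})"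
  proof (intro set_eqI iffI)
    fix x assume x: "x \<in> Ma a \<inter> {- int (5 * J)..}"
    define r where "r = nat (x mod 5)"
    have r5: "r < 5" and xr: "x = int r + 5 * (x div 5)" by (simp_all add: r_def nat_less_iff)
    have "x div 5 < a r" using x Ma_mem[OF r5, of "x div 5" a] xr by simp
    moreover have "- int J \<le> x div 5" using x by auto
    ultimately have "(r, x div 5) \<in> (SIGMA r:{..<5::nat}. {- int J..<a r})" using r5 by simp
    then show "x \<in> (\<lambda>(r,k). int r + 5*k) ` (SIGMA r:{..<5::nat}. {- int J..<a r})"
      using xr by (metis (no_types, lifting) case_prod_conv image_eqI)
  next
    fix x assume "x \<in> (\<lambda>(r,k). int r + 5*k) ` (SIGMA r:{..<5::nat}. {- int J..<a r})"
    then obtain r k where rk: "r < 5" "- int J \<le> k" "k < a r" "x = int r + 5 * k" by auto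
    then show "x \<in> Ma a \<inter> {- int (5 * J)..}" using Ma_mem[OF rk(1)] by auto
  qed
  show "inj_on (\<lambda>(r,k). int r + 5*k) (SIGMA r:{..<5::nat}. {- int J..<a r})"
  proof (rule inj_onI, clarify)
    fix r k r' k' assume r5: "r < (5::nat)" and r5': "r' < (5::nat)" and e: "int r + 5 * k = int r' + 5 * k'"
    have m1: "(int r + 5 * k) mod 5 = int r" using r5 by simp
    have m2: "(int r' + 5 * k') mod 5 = int r'" using r5' by simp
    have "int r = int r'" using e m1 m2 by metis
    then show "r = r' \<and> k = k'" using e by simp
  qed
qed

lemma Ma_window_sum:
  assumes lo: "\<forall>r<5. - int J \<le> a r"
  shows "(\<Sum>x\<in>Ma a \<inter> {- int (5 * J)..}. h x) = (\<Sum>r<5. \<Sum>k\<in>{- int J..<a r}. h (int r + 5 * k))"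
proof -
  have "(\<Sum>x\<in>Ma a \<inter> {- int (5 * J)..}. h x) =
      (\<Sum>z\<in>(SIGMA r:{..<5::nat}. {- int J..<a r}). h ((\<lambda>(r,k). int r + 5*k) z))"
    using Ma_window[OF lo] by (simp add: sum.reindex)
  also have "\<dots> = (\<Sum>(r,k)\<in>(SIGMA r:{..<5::nat}. {- int J..<a r}). h (int r + 5*k))"
    by (rule sum.cong) auto
  also have "\<dots> = (\<Sum>r<5. \<Sum>k\<in>{- int J..<a r}. h (int r + 5 * k))"
    by (rule sum.Sigma[symmetric]) auto
  finally show ?thesis .
qed

lemma Ma_window_card:
  assumes lo: "\<forall>r<5. - int J \<le> a r"
  shows "int (card (Ma a \<inter> {- int (5 * J)..})) = (\<Sum>r<5. a r + int J)"
proof -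
  have "card (Ma a \<inter> {- int (5 * J)..}) = (\<Sum>r<5. card {- int J..<a r})"
    using Ma_window[OF lo] by (simp add: card_image)
  moreover have "(\<Sum>r<5. int (card {- int J..<a r})) = (\<Sum>r<5. a r + int J)"
    by (rule sum.cong) (use lo in auto)
  ultimately show ?thesis by simp
qed

lemma tele_int:
  fixes C \<phi> :: "int \<Rightarrow> int"
  assumes d: "\<And>k. C (k + 1) - C k = \<phi> k" and le: "lo \<le> hi"
  shows "(\<Sum>k\<in>{lo..<hi}. \<phi> k) = C hi - C lo"
  using le
proof (induction hi rule: int_ge_induct)
  case base then show ?case by simp
next
  case (step i)
  have "{lo..<i + 1} = insert i {lo..<i}" using step by auto
  then show ?case using step d[of i] by simp
qed

definition C2 :: "nat \<Rightarrow> int \<Rightarrow> int" where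
  "C2 r a = 2 * int r * a + 5 * a * (a - 1)"

definition E2 :: "nat \<Rightarrow> int \<Rightarrow> int" where
  "E2 r a = (a + (if even r then 1 else 0)) div 2"

lemma C2_step: "C2 r (k + 1) - C2 r k = 2 * (int r + 5 * k)"
  by (simp add: C2_def algebra_simps)

lemma E2_step: "E2 r (k + 1) - E2 r k = gg (int r + 5 * k)"
proof (cases "even r")
  case True
  then show ?thesis
  proof (cases "even k")
    case True
    then obtain m where "k = 2 * m" by (metis evenE)
    then show ?thesis using \<open>even r\<close> by (simp add: E2_def gg_def even_add)
  next
    case False
    then obtain m where "k = 2 * m + 1" by (metis oddE)
    then show ?thesis using \<open>even r\<close> by (simp add: E2_def gg_def even_add)
  qed
next
  case False
  then show ?thesis
  proof (cases "even k")
    case True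
    then obtain m where "k = 2 * m" by (metis evenE)
    then show ?thesis using \<open>odd r\<close> by (simp add: E2_def gg_def even_add)
  next
    case False
    then obtain m where "k = 2 * m + 1" by (metis oddE)
    then show ?thesis using \<open>odd r\<close> by (simp add: E2_def gg_def even_add)
  qed
qed

definition Qd :: "(nat \<Rightarrow> int) \<Rightarrow> int" where
  "Qd a = (\<Sum>r<5. C2 r (a r))"

definition Sd :: "(nat \<Rightarrow> int) \<Rightarrow> int" where
  "Sd a = (\<Sum>r<5. E2 r (a r))"

lemma rep_sum:
  assumes p: "is_partition n p" and M: "Mset p = Ma a" and L: "length p \<le> 5 * J"
    and lo: "\<forall>r<5. - int J \<le> a r"
  shows "(\<Sum>k<5 * J. h (mm p k)) = (\<Sum>r<5. \<Sum>k\<in>{- int J..<a r}. h (int r + 5 * k))"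
  using mm_window_sum[OF p L, of h] Ma_window_sum[OF lo, of h] M by simp

lemma rep_facts:
  assumes p: "is_partition n p" and M: "Mset p = Ma a" and z: "\<forall>r\<ge>5. a r = 0"
  shows "(\<Sum>r<5. a r) = 0" "2 * int n = Qd a" "Sg p = Sd a"
proof -
  define J where "J = length p + nat (\<Sum>r<5. \<bar>a r\<bar>) + 1"
  have lo: "\<forall>r<5. - int J \<le> a r"
  proof (intro allI impI)
    fix r :: nat assume "r < 5"
    then have "\<bar>a r\<bar> \<le> (\<Sum>r<5. \<bar>a r\<bar>)"
      by (intro member_le_sum) auto
    moreover have "0 \<le> (\<Sum>r<5. \<bar>a r\<bar>)" by (intro sum_nonneg) auto
    ultimately show "- int J \<le> a r" by (simp add: J_def)
  qed
  have lo0: "\<forall>r<5. - int J \<le> (\<lambda>_. 0::int) r" by simp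
  have L: "length p \<le> 5 * J" by (simp add: J_def)
  have p0: "is_partition 0 []" by (simp add: is_partition_def)
  have L0: "length [] \<le> 5 * J" by simp
  have mm0: "mm [] k = - int k - 1" for k by (simp add: mm_def pp_def)
  have "int (card (Mset p \<inter> {- int (5 * J)..})) = int (5 * J)"
    using mm_window_card[OF p L] by simp
  then have "(\<Sum>r<5. a r + int J) = int (5 * J)" using Ma_window_card[OF lo] M by simp
  then show "(\<Sum>r<5. a r) = 0" by (simp add: sum.distrib)
  have t2: "(\<Sum>k\<in>{- int J..<hi}. 2 * (int r + 5*k)) = C2 r hi - C2 r (- int J)" if "- int J \<le> hi" for r hi
    by (rule tele_int[where C="C2 r"]) (simp_all add: C2_step that)
  have t3: "(\<Sum>k\<in>{- int J..<hi}. gg (int r + 5*k)) = E2 r hi - E2 r (- int J)" if "- int J \<le> hi" for r hi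
    by (rule tele_int[where C="E2 r"]) (simp_all add: E2_step that)
  have sA: "(\<Sum>k<5 * J. 2 * mm p k) = (\<Sum>r<5. C2 r (a r) - C2 r (- int J))"
    using rep_sum[OF p M L lo, of "\<lambda>x. 2 * x"] t2 lo by (simp add: sum_distrib_left)
  have sB: "(\<Sum>k<5 * J. 2 * mm [] k) = (\<Sum>r<5. C2 r 0 - C2 r (- int J))"
    using rep_sum[OF p0 Mset_Nil L0 lo0, of "\<lambda>x. 2 * x"] t2 by (simp add: sum_distrib_left)
  have n: "2 * int n = (\<Sum>k<5 * J. 2 * int (pp p k))"
  proof -
    have "n = sum_list p" using p by (simp add: is_partition_def)
    also have "\<dots> = (\<Sum>k<length p. pp p k)" by (simp add: sum_list_sum_nth atLeast0LessThan pp_def)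
    also have "\<dots> = (\<Sum>k<5 * J. pp p k)"
      using L by (intro sum.mono_neutral_left) (auto simp: pp_def)
    finally show ?thesis by (simp add: sum_distrib_left)
  qed
  have "(\<Sum>k<5 * J. 2 * int (pp p k)) = (\<Sum>k<5 * J. 2 * mm p k) - (\<Sum>k<5 * J. 2 * mm [] k)"
    by (simp add: mm_def mm0 sum_subtractf[symmetric] algebra_simps pp_def)
  also have "\<dots> = (\<Sum>r<5. C2 r (a r) - C2 r 0)" using sA sB by (simp add: sum_subtractf)
  also have "\<dots> = Qd a" by (simp add: Qd_def C2_def)
  finally show "2 * int n = Qd a" using n by simp
  have eA: "(\<Sum>k<5 * J. gg (mm p k)) = (\<Sum>r<5. E2 r (a r) - E2 r (- int J))"
    using rep_sum[OF p M L lo, of gg] t3 lo by simp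
  have eB: "(\<Sum>k<5 * J. gg (mm [] k)) = (\<Sum>r<5. E2 r 0 - E2 r (- int J))"
    using rep_sum[OF p0 Mset_Nil L0 lo0, of gg] t3 by simp
  have "Sg p = (\<Sum>k<5 * J. gg (mm p k)) - (\<Sum>k<5 * J. gg (mm [] k))"
    using Sg_window[OF p L] by (simp add: mm0 sum_subtractf)
  also have "\<dots> = (\<Sum>r<5. E2 r (a r) - E2 r 0)" using eA eB by (simp add: sum_subtractf)
  also have "\<dots> = Sd a" by (simp add: Sd_def E2_def)
  finally show "Sg p = Sd a" .
qed

lemma final_cases:
  fixes N S y e0 e1 e2 e3 e4 :: int
  assumes "e0 = 0 \<or> e0 = 1" "e1 = 0 \<or> e1 = 1" "e2 = 0 \<or> e2 = 1" "e3 = 0 \<or> e3 = 1" "e4 = 0 \<or> e4 = 1"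
    "y = 0 \<or> y = 1"
    and hN: "N mod 4 = (2*y + (e1 + 2*e2 + 3*e3 + 4*e4) - (e0+e1+e2+e3+e4) div 2) mod 4"
    and hNS: "(N - S) mod 4 = (2*y + (e1 + 2*e2 + 3*e3 + 4*e4) - e0 - e2 - e4) mod 4"
    and "even (e0+e1+e2+e3+e4)"
    and "e0 = 0 \<and> e1 = 1 \<and> e2 = 0 \<and> e3 = 1 \<and> e4 = 0 \<longrightarrow> y = 0"
  shows "(N mod 4 = 0 \<longrightarrow> (N - S) mod 4 = 0) \<and>
         (N mod 4 = 1 \<longrightarrow> (N - S) mod 4 = 0) \<and>
         (N mod 4 = 2 \<longrightarrow> (N - S) mod 4 \<noteq> 0) \<and>
         (N mod 4 = 3 \<longrightarrow> ((N - S) mod 4 = 0 \<longleftrightarrow> e0 = 0 \<and> e1 = 1 \<and> e2 = 0 \<and> e3 = 1 \<and> e4 = 0))"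
  using assms by (elim disjE; simp)

lemma C2_mod8:
  assumes x: "x = 2 * y + e" and e: "e = 0 \<or> e = 1"
  shows "(C2 r x - (4 * y * (int r + e) + 2 * int r * e + 2 * y)) mod 8 = 0"
proof -
  obtain z where z: "y = 2 * z \<or> y = 2 * z + 1" by (metis evenE oddE)
  have "C2 r x - (4 * y * (int r + e) + 2 * int r * e + 2 * y) = 8 * (10 * z * z - 3 * z)
     \<or> C2 r x - (4 * y * (int r + e) + 2 * int r * e + 2 * y) = 8 * (10 * z * z + 7 * z + 1)
     \<or> C2 r x - (4 * y * (int r + e) + 2 * int r * e + 2 * y) = 8 * (10 * z * z + z)
     \<or> C2 r x - (4 * y * (int r + e) + 2 * int r * e + 2 * y) = 8 * (10 * z * z + 11 * z + 3)"
    using e z by (elim disjE) (simp_all add: x C2_def algebra_simps)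
  then show ?thesis by auto
qed

lemma E2_val:
  assumes x: "x = 2 * y + e" and e: "e = 0 \<or> e = 1"
  shows "E2 r x = y + (if even r then e else 0)"
  using e by (elim disjE) (auto simp: x E2_def)

lemma sum5: fixes f :: "nat \<Rightarrow> int" shows "(\<Sum>r<5. f r) = f 0 + f 1 + f 2 + f 3 + f 4"
  by (simp add: numeral_eq_Suc)

definition special :: "(nat \<Rightarrow> int) \<Rightarrow> bool" where
  "special a \<longleftrightarrow> even (a 0) \<and> odd (a 1) \<and> even (a 2) \<and> odd (a 3) \<and> even (a 4)"

lemma arith_main:
  fixes a :: "nat \<Rightarrow> int"
  assumes z: "(\<Sum>r<5. a r) = 0"
  shows "(Qd a div 2 mod 4 = 0 \<longrightarrow> (Qd a div 2 - Sd a) mod 4 = 0) \<and>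
         (Qd a div 2 mod 4 = 1 \<longrightarrow> (Qd a div 2 - Sd a) mod 4 = 0) \<and>
         (Qd a div 2 mod 4 = 2 \<longrightarrow> (Qd a div 2 - Sd a) mod 4 \<noteq> 0) \<and>
         (Qd a div 2 mod 4 = 3 \<longrightarrow> ((Qd a div 2 - Sd a) mod 4 = 0 \<longleftrightarrow> special a))"
proof -
  define e where "e r = a r mod 2" for r
  define y where "y r = a r div 2" for r
  have ar: "a r = 2 * y r + e r" for r by (simp add: e_def y_def)
  have er: "e r = 0 \<or> e r = 1" for r by (auto simp: e_def)
  define Y where "Y = (\<Sum>r<5. y r * (int r + e r))"
  define c where "c = (\<Sum>r<5. int r * e r)"
  define s where "s = (\<Sum>r<5. y r)"
  define E where "E = (\<Sum>r<5. e r)"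
  have sE: "2 * s + E = 0" using z ar by (simp add: s_def E_def sum5)
  have Ev: "even E" using sE by (metis dvd_triv_left even_add even_zero)
  have s: "s = - (E div 2)" using sE Ev by (metis add.commute add_diff_cancel_left' diff_0 dvd_mult_div_cancel
      eq_diff_eq minus_mult_right mult.commute nonzero_mult_div_cancel_left zero_neq_numeral)
  have Qmod: "(Qd a - (4 * Y + 2 * c + 2 * s)) mod 8 = 0"
  proof -
    have "Qd a - (4 * Y + 2 * c + 2 * s) =
        (\<Sum>r<5. C2 r (a r) - (4 * y r * (int r + e r) + 2 * int r * e r + 2 * y r))"
      by (simp add: Qd_def Y_def c_def s_def sum_subtractf sum.distrib sum_distrib_left algebra_simps)
    also have "(\<dots>) mod 8 = 0"
    proof -
      have "8 dvd (\<Sum>r<5. C2 r (a r) - (4 * y r * (int r + e r) + 2 * int r * e r + 2 * y r))"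
        using C2_mod8[OF ar er] by (intro dvd_sum) (simp add: mod_0_imp_dvd)
      then show ?thesis by simp
    qed
    finally show ?thesis .
  qed
  have Sd: "Sd a = s + e 0 + e 2 + e 4"
    using E2_val[OF ar er] by (simp add: Sd_def s_def sum5)
  obtain k where k: "Qd a = 4 * Y + 2 * c + 2 * s + 8 * k"
    using Qmod by (metis dvd_def mod_0_imp_dvd diff_eq_eq add.commute)
  have N: "Qd a div 2 = 2 * Y + c + s + 4 * k" using k by simp
  have Y2: "2 * Y = 2 * (Y mod 2) + 4 * (Y div 2)" using div_mult_mod_eq[of Y 2] by linarith
  have c5: "c = e 1 + 2 * e 2 + 3 * e 3 + 4 * e 4" by (simp add: c_def sum5)
  have E5: "E = e 0 + e 1 + e 2 + e 3 + e 4" by (simp add: E_def sum5)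
  have hN: "Qd a div 2 mod 4 = (2 * (Y mod 2) + (e 1 + 2 * e 2 + 3 * e 3 + 4 * e 4)
       - (e 0 + e 1 + e 2 + e 3 + e 4) div 2) mod 4"
  proof -
    have "Qd a div 2 = (2 * (Y mod 2) + (e 1 + 2 * e 2 + 3 * e 3 + 4 * e 4)
       - (e 0 + e 1 + e 2 + e 3 + e 4) div 2) + 4 * (Y div 2 + k)"
      using N Y2 c5 E5 s by simp
    then show ?thesis by (simp only: mod_mult_self2)
  qed
  have hNS: "(Qd a div 2 - Sd a) mod 4 = (2 * (Y mod 2) + (e 1 + 2 * e 2 + 3 * e 3 + 4 * e 4)
       - e 0 - e 2 - e 4) mod 4"
  proof -
    have "Qd a div 2 - Sd a = (2 * (Y mod 2) + (e 1 + 2 * e 2 + 3 * e 3 + 4 * e 4)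
       - e 0 - e 2 - e 4) + 4 * (Y div 2 + k)"
      using N Y2 c5 Sd by simp
    then show ?thesis by (simp only: mod_mult_self2)
  qed
  have sp: "e 0 = 0 \<and> e 1 = 1 \<and> e 2 = 0 \<and> e 3 = 1 \<and> e 4 = 0 \<longrightarrow> Y mod 2 = 0"
  proof
    assume h: "e 0 = 0 \<and> e 1 = 1 \<and> e 2 = 0 \<and> e 3 = 1 \<and> e 4 = 0"
    have "Y = 2 * (y 1 + y 2 + 2 * y 3 + 2 * y 4)" using h by (simp add: Y_def sum5 algebra_simps)
    then show "Y mod 2 = 0" by simp
  qed
  have spa: "special a \<longleftrightarrow> e 0 = 0 \<and> e 1 = 1 \<and> e 2 = 0 \<and> e 3 = 1 \<and> e 4 = 0"
    by (simp add: special_def e_def even_iff_mod_2_eq_zero odd_iff_mod_2_eq_one)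
  have y01: "Y mod 2 = 0 \<or> Y mod 2 = 1" by auto
  show ?thesis
    using final_cases[OF er[of 0] er[of 1] er[of 2] er[of 3] er[of 4] y01 hN hNS _ sp] Ev E5 spa
    by simp
qed

definition phi :: "(nat \<Rightarrow> int) \<Rightarrow> nat \<Rightarrow> int" where
  "phi a r = (if r = 0 then 2 * a 1 else if r = 1 then 2 * a 4 + 1 else if r = 2 then 2 * a 2
     else if r = 3 then 2 * a 0 - 1 else if r = 4 then 2 * a 3 else 0)"

definition psi :: "(nat \<Rightarrow> int) \<Rightarrow> nat \<Rightarrow> int" where
  "psi b r = (if r = 0 then (b 3 + 1) div 2 else if r = 1 then b 0 div 2 else if r = 2 then b 2 div 2
     else if r = 3 then b 4 div 2 else if r = 4 then (b 1 - 1) div 2 else 0)"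

definition Avec :: "(nat \<Rightarrow> int) set" where
  "Avec = {a. (\<forall>r\<ge>5. a r = 0) \<and> (\<Sum>r<5. a r) = 0}"

lemma phi_Avec: "a \<in> Avec \<Longrightarrow> phi a \<in> Avec"
  by (auto simp: Avec_def phi_def sum5)

lemma phi_special: "special (phi a)"
  by (simp add: special_def phi_def)

lemma phi_Qd:
  assumes "a \<in> Avec"
  shows "Qd (phi a) = 4 * Qd a + 6"
proof -
  have z: "a 4 = - (a 0 + a 1 + a 2 + a 3)" using assms by (simp add: Avec_def sum5)
  show ?thesis
    by (simp add: Qd_def sum5 C2_def phi_def z algebra_simps)
qed

lemma psi_phi: "a \<in> Avec \<Longrightarrow> psi (phi a) = a"
  by (rule ext) (auto simp: psi_def phi_def Avec_def)

lemma phi_psi: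
  assumes "b \<in> Avec" "special b"
  shows "phi (psi b) = b"
proof (rule ext)
  fix r
  show "phi (psi b) r = b r"
    using assms
    by (auto simp: psi_def phi_def Avec_def special_def elim!: evenE oddE)
qed

lemma psi_Avec:
  assumes "b \<in> Avec" "special b"
  shows "psi b \<in> Avec"
proof -
  have "phi (psi b) = b" by (rule phi_psi[OF assms])
  then have "(\<Sum>r<5. phi (psi b) r) = 0" using assms by (simp add: Avec_def)
  then have "(\<Sum>r<5. psi b r) = 0" by (simp add: sum5 phi_def)
  then show ?thesis by (simp add: Avec_def psi_def)
qed

lemma count_special:
  "card {b \<in> Avec. Qd b = 4 * Qd' + 6 \<and> special b} = card {a \<in> Avec. Qd a = Qd'}"
proof -
  have "bij_betw phi {a \<in> Avec. Qd a = Qd'} {b \<in> Avec. Qd b = 4 * Qd' + 6 \<and> special b}"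
  proof (rule bij_betw_byWitness[where f' = psi])
    show "\<forall>a\<in>{a \<in> Avec. Qd a = Qd'}. psi (phi a) = a" using psi_phi by auto
    show "\<forall>b\<in>{b \<in> Avec. Qd b = 4 * Qd' + 6 \<and> special b}. phi (psi b) = b" using phi_psi by auto
    show "phi ` {a \<in> Avec. Qd a = Qd'} \<subseteq> {b \<in> Avec. Qd b = 4 * Qd' + 6 \<and> special b}"
      using phi_Avec phi_Qd phi_special by auto
    show "psi ` {b \<in> Avec. Qd b = 4 * Qd' + 6 \<and> special b} \<subseteq> {a \<in> Avec. Qd a = Qd'}"
    proof clarify
      fix b assume b: "b \<in> Avec" "Qd b = 4 * Qd' + 6" "special b"
      have "Qd (phi (psi b)) = 4 * Qd (psi b) + 6" using phi_Qd psi_Avec b by blast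
      then have "Qd (psi b) = Qd'" using phi_psi[OF b(1,3)] b(2) by simp
      then show "psi b \<in> Avec \<and> Qd (psi b) = Qd'" using psi_Avec b by blast
    qed
  qed
  then show ?thesis by (simp add: bij_betw_same_card)
qed

lemma G_exists:
  assumes a: "a \<in> Avec"
  shows "\<exists>p. is_partition (sum_list p) p \<and> Mset p = Ma a"
proof -
  define J where "J = nat (\<Sum>r<5. \<bar>a r\<bar>) + 1"
  have lo: "\<forall>r<5. - int J \<le> a r"
  proof (intro allI impI)
    fix r :: nat assume "r < 5"
    then have "\<bar>a r\<bar> \<le> (\<Sum>r<5. \<bar>a r\<bar>)"
      by (intro member_le_sum) auto
    moreover have "0 \<le> (\<Sum>r<5. \<bar>a r\<bar>)" by (intro sum_nonneg) auto
    ultimately show "- int J \<le> a r" by (simp add: J_def)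
  qed
  have z: "(\<Sum>r<5. a r) = 0" using a by (simp add: Avec_def)
  show ?thesis
  proof (rule from_maya[of "Ma a" "5 * J"])
    show "finite (Ma a \<inter> {- int (5 * J)..})" using Ma_window(1)[OF lo] by simp
    have "int (card (Ma a \<inter> {- int (5 * J)..})) = (\<Sum>r<5. a r + int J)"
      by (rule Ma_window_card[OF lo])
    also have "\<dots> = int (5 * J)" using z by (simp add: sum.distrib)
    finally show "card (Ma a \<inter> {- int (5 * J)..}) = 5 * J" by simp
  next
    fix x :: int assume x: "x < - int (5 * J)"
    define r where "r = nat (x mod 5)"
    have r5: "r < 5" and xr: "x = int r + 5 * (x div 5)" by (simp_all add: r_def nat_less_iff)
    have "x div 5 < - int J" using x xr r5 by linarith
    then have "x div 5 < a r" using lo r5 by force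
    then show "x \<in> Ma a" using Ma_mem[OF r5, of "x div 5" a] xr by simp
  qed
qed

definition G :: "(nat \<Rightarrow> int) \<Rightarrow> nat list" where
  "G a = (SOME p. is_partition (sum_list p) p \<and> Mset p = Ma a)"

lemma G_ok: "a \<in> Avec \<Longrightarrow> is_partition (sum_list (G a)) (G a) \<and> Mset (G a) = Ma a"
  unfolding G_def by (rule someI_ex) (rule G_exists)

lemma count_eq:
  fixes \<Phi> :: "int \<Rightarrow> bool"
  shows "card {p \<in> partitions n. is_core 5 p \<and> \<Phi> (Sg p)} = card {a \<in> Avec. Qd a = 2 * int n \<and> \<Phi> (Sd a)}"
proof -
  have "bij_betw G {a \<in> Avec. Qd a = 2 * int n \<and> \<Phi> (Sd a)} {p \<in> partitions n. is_core 5 p \<and> \<Phi> (Sg p)}"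
  proof (rule bij_betw_imageI)
    show "inj_on G {a \<in> Avec. Qd a = 2 * int n \<and> \<Phi> (Sd a)}"
    proof (rule inj_onI)
      fix a b assume a: "a \<in> {a \<in> Avec. Qd a = 2 * int n \<and> \<Phi> (Sd a)}"
        and b: "b \<in> {a \<in> Avec. Qd a = 2 * int n \<and> \<Phi> (Sd a)}" and e: "G a = G b"
      have "Ma a = Ma b" using G_ok[of a] G_ok[of b] a b e by auto
      then show "a = b" using Ma_inj a b by (auto simp: Avec_def)
    qed
  next
    show "G ` {a \<in> Avec. Qd a = 2 * int n \<and> \<Phi> (Sd a)} = {p \<in> partitions n. is_core 5 p \<and> \<Phi> (Sg p)}"
    proof (intro set_eqI iffI)
      fix p assume "p \<in> G ` {a \<in> Avec. Qd a = 2 * int n \<and> \<Phi> (Sd a)}"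
      then obtain a where a: "a \<in> Avec" "Qd a = 2 * int n" "\<Phi> (Sd a)" and p: "p = G a" by auto
      have pp: "is_partition (sum_list p) p" and M: "Mset p = Ma a" using G_ok[OF a(1)] p by auto
      have z: "\<forall>r\<ge>5. a r = 0" using a(1) by (simp add: Avec_def)
      note rf = rep_facts[OF pp M z]
      have "sum_list p = n" using rf(2) a(2) by simp
      then have pn: "is_partition n p" using pp by simp
      have "is_core 5 p" using core_iff[OF pn, of 5] M Ma_closed by simp
      moreover have "\<Phi> (Sg p)" using rf(3) a(3) by simp
      ultimately show "p \<in> {p \<in> partitions n. is_core 5 p \<and> \<Phi> (Sg p)}" using pn by (simp add: partitions_def)
    next
      fix p assume "p \<in> {p \<in> partitions n. is_core 5 p \<and> \<Phi> (Sg p)}"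
      then have pn: "is_partition n p" and c: "is_core 5 p" and ph: "\<Phi> (Sg p)" by (auto simp: partitions_def)
      have cl: "\<forall>x\<in>Mset p. x - 5 \<in> Mset p" using core_iff[OF pn, of 5] c by simp
      obtain a where z: "\<forall>r\<ge>5. a r = 0" and M: "Mset p = Ma a" using core_levels[OF pn cl] by blast
      note rf = rep_facts[OF pn M z]
      have aA: "a \<in> Avec" using z rf(1) by (simp add: Avec_def)
      have "G a = p" using G_ok[OF aA] M Mset_inj[OF _ pn] by metis
      then show "p \<in> G ` {a \<in> Avec. Qd a = 2 * int n \<and> \<Phi> (Sd a)}"
        using aA rf(2,3) ph by force
    qed
  qed
  then show ?thesis by (simp add: bij_betw_same_card)
qed

lemma a5_count: "a5 n = card {a \<in> Avec. Qd a = 2 * int n}"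
  using count_eq[of n "\<lambda>_. True"] by (simp add: a5_def)

lemma a50_count: "a50 n = card {a \<in> Avec. Qd a = 2 * int n \<and> (int n - Sd a) mod 4 = 0}"
proof -
  have "{p \<in> partitions n. is_core 5 p \<and> srank p mod 4 = 0} =
        {p \<in> partitions n. is_core 5 p \<and> (int n - Sg p) mod 4 = 0}"
  proof (intro Collect_cong conj_cong refl)
    fix p assume "p \<in> partitions n"
    then have "srank p mod 4 = (int n - Sg p) mod 4" using srank_mod4 by (simp add: partitions_def)
    then show "(srank p mod 4 = 0) = ((int n - Sg p) mod 4 = 0)" by simp
  qed
  then show ?thesis using count_eq[of n "\<lambda>S. (int n - S) mod 4 = 0"] by (simp add: a50_def)
qed

theorem mainTheorem11:
  fixes n :: nat
  shows "a50 (4 * n) = a5 (4 * n) \<and> a50 (4 * n + 1) = a5 (4 * n + 1) \<and>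
         a50 (4 * n + 2) = 0 \<and> a50 (4 * n + 3) = a5 n"
proof -
  have key: "Qd a = 2 * int N \<Longrightarrow> a \<in> Avec \<Longrightarrow> Qd a div 2 = int N" for a N by simp
  have am: "a \<in> Avec \<Longrightarrow> (\<Sum>r<5. a r) = 0" for a by (simp add: Avec_def)
  have AM: "\<And>a N. a \<in> Avec \<Longrightarrow> Qd a = 2 * int N \<Longrightarrow>
         (int N mod 4 = 0 \<longrightarrow> (int N - Sd a) mod 4 = 0) \<and>
         (int N mod 4 = 1 \<longrightarrow> (int N - Sd a) mod 4 = 0) \<and>
         (int N mod 4 = 2 \<longrightarrow> (int N - Sd a) mod 4 \<noteq> 0) \<and>
         (int N mod 4 = 3 \<longrightarrow> ((int N - Sd a) mod 4 = 0 \<longleftrightarrow> special a))"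
  proof -
    fix a N assume a: "a \<in> Avec" "Qd a = 2 * int N"
    then have "Qd a div 2 = int N" by simp
    then show "?thesis a N" using arith_main[OF am[OF a(1)]] by simp
  qed
  have m0: "int (4 * n) mod 4 = 0" "int (4 * n + 1) mod 4 = 1" "int (4 * n + 2) mod 4 = 2"
    "int (4 * n + 3) mod 4 = 3" by simp_all
  have c0: "a50 (4 * n) = a5 (4 * n)"
  proof -
    have "{a \<in> Avec. Qd a = 2 * int (4 * n) \<and> (int (4 * n) - Sd a) mod 4 = 0} = {a \<in> Avec. Qd a = 2 * int (4 * n)}"
    proof (intro Collect_cong)
      fix a
      show "(a \<in> Avec \<and> Qd a = 2 * int (4 * n) \<and> (int (4 * n) - Sd a) mod 4 = 0) = (a \<in> Avec \<and> Qd a = 2 * int (4 * n))"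
        using AM[of a "4 * n"] m0(1) by (cases "a \<in> Avec \<and> Qd a = 2 * int (4 * n)") auto
    qed
    then show ?thesis by (simp add: a50_count a5_count)
  qed
  have c1: "a50 (4 * n + 1) = a5 (4 * n + 1)"
  proof -
    have "{a \<in> Avec. Qd a = 2 * int (4 * n + 1) \<and> (int (4 * n + 1) - Sd a) mod 4 = 0} = {a \<in> Avec. Qd a = 2 * int (4 * n + 1)}"
    proof (intro Collect_cong)
      fix a
      show "(a \<in> Avec \<and> Qd a = 2 * int (4 * n + 1) \<and> (int (4 * n + 1) - Sd a) mod 4 = 0) = (a \<in> Avec \<and> Qd a = 2 * int (4 * n + 1))"
        using AM[of a "4 * n + 1"] m0(2) by (cases "a \<in> Avec \<and> Qd a = 2 * int (4 * n + 1)") auto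
    qed
    then show ?thesis by (simp only: a50_count a5_count)
  qed
  have c2: "a50 (4 * n + 2) = 0"
  proof -
    have "{a \<in> Avec. Qd a = 2 * int (4 * n + 2) \<and> (int (4 * n + 2) - Sd a) mod 4 = 0} = {}"
    proof (intro equals0I)
      fix a assume "a \<in> {a \<in> Avec. Qd a = 2 * int (4 * n + 2) \<and> (int (4 * n + 2) - Sd a) mod 4 = 0}"
      then show False using AM[of a "4 * n + 2"] m0(3) by simp
    qed
    then show ?thesis by (simp only: a50_count card.empty)
  qed
  have c3: "a50 (4 * n + 3) = a5 n"
  proof -
    have "{a \<in> Avec. Qd a = 2 * int (4 * n + 3) \<and> (int (4 * n + 3) - Sd a) mod 4 = 0}
        = {b \<in> Avec. Qd b = 4 * (2 * int n) + 6 \<and> special b}"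
    proof -
      have e: "2 * int (4 * n + 3) = 4 * (2 * int n) + 6" by simp
      show ?thesis unfolding e
      proof (intro Collect_cong)
        fix a
        show "(a \<in> Avec \<and> Qd a = 4 * (2 * int n) + 6 \<and> (int (4 * n + 3) - Sd a) mod 4 = 0) =
              (a \<in> Avec \<and> Qd a = 4 * (2 * int n) + 6 \<and> special a)"
          using AM[of a "4 * n + 3"] m0(4) e by (cases "a \<in> Avec \<and> Qd a = 4 * (2 * int n) + 6") auto
      qed
    qed
    then show ?thesis using count_special[of "2 * int n"] by (simp only: a50_count a5_count)
  qed
  show ?thesis using c0 c1 c2 c3 by simp
qed

end
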